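(* Let $S$ be a compact, metrizable, separable space, let $A$ be the generator of a Feller semigroup on $C(S)$, and let $R_\lambda=(\lambda-A)^{-1}$, $\lambda>0$, be its resolvent. Suppose $(0,\infty)\ni\lambda\mapsto \ell_\lambda\in C(S)$ is locally bounded and satisfies $$(\lambda-\mu)R_\lambda \ell_\mu=\ell_\mu-\ell_\lambda,\qquad \lambda,\mu>0.$$ Then $\lambda\mapsto\ell_\lambda$ is infinitely differentiable (as a $C(S)$-valued map) and $$\ell_\lambda^{(n)}=(-1)^n n!\,(R_\lambda)^n\ell_\lambda,\qquad n\ge 1,\ \lambda>0.$$
   Context: $C(S)$ is the Banach space of real continuous functions on $S$ with the supremum norm. A Feller semigroup is a strongly continuous semigroup of positive contraction operators on $C(S)$ with $T(0)=I$; it need not be conservative (i.e. $T(t)1_S=1_S$ is not required). Its generator is $Af=\lim_{t\to0}t^{-1}(T(t)f-f)$ on the set of $f$ for which the limit exists in norm; the resolvent satisfies $\|\lambda R_\lambda\|\le 1$. *)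

theory Defs
  imports "HOL-Analysis.Analysis"
begin

text \<open>C(S) is modelled by the Banach space ('a, real) bcontfun of bounded continuous
  real functions on the type 'a; for compact 'a every continuous function is bounded,
  so this is exactly C(S) with the supremum norm.\<close>

type_synonym 'a CS = "('a, real) bcontfun"

definition positive_op :: "('a::topological_space CS \<Rightarrow>\<^sub>L 'a CS) \<Rightarrow> bool" where
  "positive_op P \<longleftrightarrow>
     (\<forall>f. (\<forall>x. 0 \<le> apply_bcontfun f x) \<longrightarrow> (\<forall>x. 0 \<le> apply_bcontfun (blinfun_apply P f) x))"

text \<open>Feller semigroup: strongly continuous semigroup of positive contractions with T(0) = I
  (not necessarily conservative).\<close>
definition feller_semigroup :: "(real \<Rightarrow> ('a::topological_space CS \<Rightarrow>\<^sub>L 'a CS)) \<Rightarrow> bool" where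
  "feller_semigroup T \<longleftrightarrow>
     T 0 = id_blinfun \<and>
     (\<forall>s\<ge>0. \<forall>t\<ge>0. T (s + t) = T s o\<^sub>L T t) \<and>
     (\<forall>t\<ge>0. positive_op (T t)) \<and>
     (\<forall>t\<ge>0. norm (T t) \<le> 1) \<and>
     (\<forall>f. continuous_on {0..} (\<lambda>t. blinfun_apply (T t) f))"

definition gen_dom :: "(real \<Rightarrow> ('a::topological_space CS \<Rightarrow>\<^sub>L 'a CS)) \<Rightarrow> 'a CS set" where
  "gen_dom T = {f. \<exists>g. ((\<lambda>t. (1 / t) *\<^sub>R (blinfun_apply (T t) f - f)) \<longlongrightarrow> g) (at_right 0)}"

definition generator :: "(real \<Rightarrow> ('a::topological_space CS \<Rightarrow>\<^sub>L 'a CS)) \<Rightarrow> 'a CS \<Rightarrow> 'a CS" where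
  "generator T f = Lim (at_right 0) (\<lambda>t. (1 / t) *\<^sub>R (blinfun_apply (T t) f - f))"

definition resolvent :: "(real \<Rightarrow> ('a::topological_space CS \<Rightarrow>\<^sub>L 'a CS)) \<Rightarrow> real \<Rightarrow> 'a CS \<Rightarrow> 'a CS" where
  "resolvent T lam g = (THE f. f \<in> gen_dom T \<and> lam *\<^sub>R f - generator T f = g)"

end

theory Submission imports Defs begin

instance bcontfun :: (metric_space, banach) banach ..

lemma vderiv_quot:
  fixes f :: "real \<Rightarrow> 'b::real_normed_vector"
  assumes "(f has_vector_derivative f') (at x within S)"
  shows "((\<lambda>y. (1/(y-x)) *\<^sub>R (f y - f x)) \<longlongrightarrow> f') (at x within S)"
proof -
  from assms have "((\<lambda>y. norm ((f y - f x) - (y - x) *\<^sub>R f') / norm (y - x)) \<longlongrightarrow> 0) (at x within S)"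
    unfolding has_vector_derivative_def has_derivative_iff_norm by auto
  moreover have "eventually (\<lambda>y. norm ((f y - f x) - (y - x) *\<^sub>R f') / norm (y - x)
      = norm ((1/(y-x)) *\<^sub>R (f y - f x) - f')) (at x within S)"
  proof -
    have "norm ((f y - f x) - (y - x) *\<^sub>R f') / norm (y - x)
      = norm ((1/(y-x)) *\<^sub>R (f y - f x) - f')" if "y \<noteq> x" for y
    proof -
      have "(1/(y-x)) *\<^sub>R ((y - x) *\<^sub>R f') = f'" using that by simp
      then have "(1/(y-x)) *\<^sub>R (f y - f x) - f' = (1/(y-x)) *\<^sub>R ((f y - f x) - (y - x) *\<^sub>R f')"
        by (simp add: scaleR_right_diff_distrib)
      then show ?thesis by (simp add: divide_simps)
    qed
    then show ?thesis unfolding eventually_at_filter by (auto intro: always_eventually)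
  qed
  ultimately have "((\<lambda>y. norm ((1/(y-x)) *\<^sub>R (f y - f x) - f')) \<longlongrightarrow> 0) (at x within S)"
    by (rule Lim_transform_eventually)
  then show ?thesis by (simp add: tendsto_norm_zero_iff LIM_zero_iff)
qed

lemma quot_right:
  fixes G :: "real \<Rightarrow> 'b::real_normed_vector"
  assumes "(G has_vector_derivative v) (at x within {a..b})" "a \<le> x" "x < b"
  shows "((\<lambda>h. (1/h) *\<^sub>R (G (x+h) - G x)) \<longlongrightarrow> v) (at_right 0)"
proof -
  have ev: "eventually (\<lambda>h. x + h \<in> {a..b} \<and> x + h \<noteq> x) (at_right (0::real))"
    by (rule eventually_at_rightI[where b="b - x"]) (use assms in auto)
  have "((\<lambda>h. x + h) \<longlongrightarrow> x + 0) (at_right (0::real))"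
    by (intro tendsto_intros)
  then have "filterlim (\<lambda>h. x + h) (at x within {a..b}) (at_right 0)"
    using ev unfolding filterlim_at by simp
  from filterlim_compose[OF vderiv_quot[OF assms(1)] this] show ?thesis by simp
qed

lemma exp_quot: "((\<lambda>h. (exp (lam*h) - 1) / h) \<longlongrightarrow> (lam::real)) (at_right 0)"
proof -
  have "((\<lambda>h. exp (lam*h)) has_field_derivative lam) (at 0)"
    by (auto intro!: derivative_eq_intros)
  then have "((\<lambda>h. (exp (lam*h) - exp (lam*0)) / (h - 0)) \<longlongrightarrow> lam) (at 0)"
    unfolding has_field_derivative_iff .
  then have "((\<lambda>h. (exp (lam*h) - 1) / h) \<longlongrightarrow> lam) (at 0)" by simp
  then show ?thesis by (rule tendsto_mono[rotated]) (simp add: at_le)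
qed

context
  fixes T :: "real \<Rightarrow> ('a::metric_space CS \<Rightarrow>\<^sub>L 'a CS)"
  assumes fs: "feller_semigroup T"
begin

lemma T0: "T 0 = id_blinfun" using fs unfolding feller_semigroup_def by auto
lemma Tadd: "s \<ge> 0 \<Longrightarrow> t \<ge> 0 \<Longrightarrow> T (s + t) = T s o\<^sub>L T t" using fs unfolding feller_semigroup_def by auto
lemma Tn: "t \<ge> 0 \<Longrightarrow> norm (T t) \<le> 1" using fs unfolding feller_semigroup_def by auto
lemma Tc: "continuous_on {0..} (\<lambda>t. blinfun_apply (T t) f)" using fs unfolding feller_semigroup_def by auto

lemma gen_lim:
  assumes "f \<in> gen_dom T"
  shows "((\<lambda>t. (1 / t) *\<^sub>R (blinfun_apply (T t) f - f)) \<longlongrightarrow> generator T f) (at_right 0)"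
  using assms tendsto_Lim[OF trivial_limit_at_right_real] unfolding gen_dom_def generator_def
  by blast

lemma gen_intro:
  assumes "((\<lambda>t. (1 / t) *\<^sub>R (blinfun_apply (T t) f - f)) \<longlongrightarrow> g) (at_right 0)"
  shows "f \<in> gen_dom T \<and> generator T f = g"
proof
  show "f \<in> gen_dom T" using assms unfolding gen_dom_def by blast
  show "generator T f = g" unfolding generator_def
    using tendsto_Lim[OF trivial_limit_at_right_real assms] assms tendsto_unique[OF trivial_limit_at_right_real]
    by blast
qed

lemma gen_lin:
  assumes "f \<in> gen_dom T" "g \<in> gen_dom T"
  shows "a *\<^sub>R f + b *\<^sub>R g \<in> gen_dom T \<and> generator T (a *\<^sub>R f + b *\<^sub>R g) = a *\<^sub>R generator T f + b *\<^sub>R generator T g"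
proof -
  have "((\<lambda>t. a *\<^sub>R ((1 / t) *\<^sub>R (blinfun_apply (T t) f - f)) + b *\<^sub>R ((1 / t) *\<^sub>R (blinfun_apply (T t) g - g)))
     \<longlongrightarrow> a *\<^sub>R generator T f + b *\<^sub>R generator T g) (at_right 0)"
    by (intro tendsto_intros gen_lim assms)
  moreover have "\<And>t. a *\<^sub>R ((1 / t) *\<^sub>R (blinfun_apply (T t) f - f)) + b *\<^sub>R ((1 / t) *\<^sub>R (blinfun_apply (T t) g - g))
     = (1 / t) *\<^sub>R (blinfun_apply (T t) (a *\<^sub>R f + b *\<^sub>R g) - (a *\<^sub>R f + b *\<^sub>R g))"
    by (simp add: blinfun.add_right blinfun.scaleR_right algebra_simps)
  ultimately show ?thesis using gen_intro by simp
qed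

lemma dissip:
  assumes "f \<in> gen_dom T" and lam: "lam > 0"
  shows "lam * norm f \<le> norm (lam *\<^sub>R f - generator T f)"
proof -
  let ?q = "\<lambda>t. (1 / t) *\<^sub>R (blinfun_apply (T t) f - f)"
  have lim: "((\<lambda>t. norm (lam *\<^sub>R f - ?q t)) \<longlongrightarrow> norm (lam *\<^sub>R f - generator T f)) (at_right 0)"
    by (intro tendsto_intros gen_lim assms)
  have ev: "eventually (\<lambda>t. lam * norm f \<le> norm (lam *\<^sub>R f - ?q t)) (at_right 0)"
  proof (rule eventually_at_rightI[where b=1])
    fix t :: real assume "t \<in> {0<..<1}"
    then have t: "t > 0" by auto
    have Tt: "norm (blinfun_apply (T t) f) \<le> norm f"
      using norm_blinfun[of "T t" f] Tn[of t] t
      by (meson dual_order.trans le_less mult_left_le_one_le norm_ge_zero)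
    have eq: "(1 + lam*t) *\<^sub>R f - blinfun_apply (T t) f = t *\<^sub>R (lam *\<^sub>R f - ?q t)"
      using t by (simp add: algebra_simps)
    have "(1 + lam*t) * norm f = norm ((1 + lam*t) *\<^sub>R f)"
      using lam t by simp
    also have "\<dots> \<le> norm (blinfun_apply (T t) f) + norm ((1 + lam*t) *\<^sub>R f - blinfun_apply (T t) f)"
      by (rule norm_triangle_sub)
    also have "\<dots> \<le> norm f + t * norm (lam *\<^sub>R f - ?q t)"
      using Tt t unfolding eq by simp
    finally have "t * (lam * norm f) \<le> t * norm (lam *\<^sub>R f - ?q t)"
      by (simp add: algebra_simps)
    then show "lam * norm f \<le> norm (lam *\<^sub>R f - ?q t)" using t by simp
  qed simp
  show ?thesis by (rule tendsto_lowerbound[OF lim ev trivial_limit_at_right_real])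
qed

end

context
  fixes T :: "real \<Rightarrow> ('a::metric_space CS \<Rightarrow>\<^sub>L 'a CS)"
  assumes fs: "feller_semigroup T"
begin

lemma integ:
  fixes g :: "'a CS"
  assumes lam: "lam > 0"
  defines "\<phi> \<equiv> \<lambda>u. exp (- lam * u) *\<^sub>R blinfun_apply (T u) g"
  defines "G \<equiv> \<lambda>u. integral {0..u} \<phi>"
  shows "G 1 \<in> gen_dom T \<and> generator T (G 1) = lam *\<^sub>R G 1 + exp (- lam) *\<^sub>R blinfun_apply (T 1) g - g"
proof -
  have phic: "continuous_on {0..} \<phi>" unfolding \<phi>_def by (intro continuous_intros Tc[OF fs])
  have phi2: "continuous_on {0..2} \<phi>" using phic by (rule continuous_on_subset) auto
  have int: "\<phi> integrable_on {0..b}" if "0 \<le> b" for b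
    by (rule integrable_continuous_interval, rule continuous_on_subset[OF phic]) auto
  have deriv: "(G has_vector_derivative \<phi> x) (at x within {0..2})" if "x \<in> {0..2}" for x
    unfolding G_def by (rule integral_has_vector_derivative[OF phi2 that])
  have q1: "((\<lambda>h. (1/h) *\<^sub>R (G (1+h) - G 1)) \<longlongrightarrow> \<phi> 1) (at_right 0)"
    by (rule quot_right[OF deriv]) auto
  have q0: "((\<lambda>h. (1/h) *\<^sub>R (G (0+h) - G 0)) \<longlongrightarrow> \<phi> 0) (at_right 0)"
    by (rule quot_right[OF deriv]) auto
  have G0: "G 0 = 0" unfolding G_def by simp
  have shift: "blinfun_apply (T h) (G 1) = exp (lam*h) *\<^sub>R (G (1+h) - G h)" if h: "0 < h" for h
  proof -
    have "blinfun_apply (T h) (G 1) = integral {0..1} (blinfun_apply (T h) \<circ> \<phi>)"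
      unfolding G_def by (rule integral_linear[symmetric]) (auto intro: int blinfun.bounded_linear_right)
    also have "\<dots> = integral {0..1} (\<lambda>t. exp (lam*h) *\<^sub>R (\<phi> \<circ> (+) h) t)"
    proof (rule integral_cong)
      fix t :: real assume "t \<in> {0..1}"
      then have t: "t \<ge> 0" by auto
      have e: "exp (lam*h) * exp (- lam * (h + t)) = exp (- lam * t)"
        by (subst exp_add[symmetric]) (simp add: algebra_simps)
      show "(blinfun_apply (T h) \<circ> \<phi>) t = exp (lam*h) *\<^sub>R (\<phi> \<circ> (+) h) t"
        unfolding \<phi>_def using Tadd[OF fs, of h t] h t e
        by (simp add: blinfun.scaleR_right)
    qed
    also have "\<dots> = exp (lam*h) *\<^sub>R integral {0..1} (\<phi> \<circ> (+) h)" by (simp add: comp_def)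
    also have "integral {0..1} (\<phi> \<circ> (+) h) = integral {h..1+h} \<phi>"
      using integral_shift_Icc_real[of 0 1 \<phi> h] by (simp add: add.commute)
    also have "integral {h..1+h} \<phi> = G (1+h) - G h"
      using Henstock_Kurzweil_Integration.integral_combine[where a=0 and c=h and b="1+h" and f=\<phi>] int[of "1+h"] h unfolding G_def by (simp add: eq_diff_eq add.commute)
    finally show ?thesis .
  qed
  let ?Q1 = "\<lambda>h. (1/h) *\<^sub>R (G (1+h) - G 1)"
  let ?Q0 = "\<lambda>h. (1/h) *\<^sub>R (G (0+h) - G 0)"
  have eq: "((exp (lam*h) - 1)/h) *\<^sub>R (G 1 + h *\<^sub>R ?Q1 h - h *\<^sub>R ?Q0 h) + ?Q1 h - ?Q0 h
      = (1 / h) *\<^sub>R (blinfun_apply (T h) (G 1) - G 1)" if h: "0 < h" for h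
  proof -
    have a: "h *\<^sub>R ?Q1 h = G (1+h) - G 1" "h *\<^sub>R ?Q0 h = G h" using h G0 by auto
    show ?thesis unfolding shift[OF h] a using G0
      by (simp add: algebra_simps divide_inverse scaleR_right_diff_distrib)
  qed
  have "((\<lambda>h. ((exp (lam*h) - 1)/h) *\<^sub>R (G 1 + h *\<^sub>R ?Q1 h - h *\<^sub>R ?Q0 h) + ?Q1 h - ?Q0 h)
     \<longlongrightarrow> lam *\<^sub>R (G 1 + 0 *\<^sub>R \<phi> 1 - 0 *\<^sub>R \<phi> 0) + \<phi> 1 - \<phi> 0) (at_right 0)"
    by (intro tendsto_intros exp_quot q1 q0 tendsto_ident_at)
  moreover have VV: "lam *\<^sub>R (G 1 + 0 *\<^sub>R \<phi> 1 - 0 *\<^sub>R \<phi> 0) + \<phi> 1 - \<phi> 0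
      = lam *\<^sub>R G 1 + exp (- lam) *\<^sub>R blinfun_apply (T 1) g - g"
    by (simp add: \<phi>_def T0[OF fs])
  ultimately have L: "((\<lambda>h. ((exp (lam*h) - 1)/h) *\<^sub>R (G 1 + h *\<^sub>R ?Q1 h - h *\<^sub>R ?Q0 h) + ?Q1 h - ?Q0 h)
     \<longlongrightarrow> lam *\<^sub>R G 1 + exp (- lam) *\<^sub>R blinfun_apply (T 1) g - g) (at_right 0)" by (simp only: VV)
  have "eventually (\<lambda>h. ((exp (lam*h) - 1)/h) *\<^sub>R (G 1 + h *\<^sub>R ?Q1 h - h *\<^sub>R ?Q0 h) + ?Q1 h - ?Q0 h
      = (1 / h) *\<^sub>R (blinfun_apply (T h) (G 1) - G 1)) (at_right 0)"
    by (rule eventually_at_rightI[where b=1]) (metis eq greaterThanLessThan_iff, simp)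
  from Lim_transform_eventually[OF L this]
  have "((\<lambda>h. (1 / h) *\<^sub>R (blinfun_apply (T h) (G 1) - G 1))
     \<longlongrightarrow> lam *\<^sub>R G 1 + exp (- lam) *\<^sub>R blinfun_apply (T 1) g - g) (at_right 0)" .
  then show ?thesis by (rule gen_intro[OF fs])
qed

lemma exist:
  assumes lam: "lam > 0"
  shows "\<exists>f\<in>gen_dom T. lam *\<^sub>R f - generator T f = g"
proof -
  let ?c = "exp (- lam)"
  have c: "0 \<le> ?c" "?c < 1" using lam by auto
  have "\<exists>!h. g + ?c *\<^sub>R blinfun_apply (T 1) h = h"
  proof (rule banach_fix_type[OF c])
    show "\<forall>x y. dist (g + ?c *\<^sub>R blinfun_apply (T 1) x) (g + ?c *\<^sub>R blinfun_apply (T 1) y) \<le> ?c * dist x y"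
    proof (intro allI)
      fix x y
      have "dist (g + ?c *\<^sub>R blinfun_apply (T 1) x) (g + ?c *\<^sub>R blinfun_apply (T 1) y)
          = ?c * norm (blinfun_apply (T 1) (x - y))"
        by (simp add: dist_norm blinfun.diff_right scaleR_right_diff_distrib[symmetric])
      also have "\<dots> \<le> ?c * (norm (T 1) * norm (x - y))"
        by (intro mult_left_mono norm_blinfun) auto
      also have "\<dots> \<le> ?c * (1 * norm (x - y))"
        by (intro mult_left_mono mult_right_mono Tn[OF fs]) auto
      finally show "dist (g + ?c *\<^sub>R blinfun_apply (T 1) x) (g + ?c *\<^sub>R blinfun_apply (T 1) y) \<le> ?c * dist x y"
        by (simp add: dist_norm)
    qed
  qed
  then obtain h where h: "g + ?c *\<^sub>R blinfun_apply (T 1) h = h" by blast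
  define F where "F = integral {0..1} (\<lambda>u. exp (- lam * u) *\<^sub>R blinfun_apply (T u) h)"
  from integ[OF lam, of h] have F: "F \<in> gen_dom T" "generator T F = lam *\<^sub>R F + ?c *\<^sub>R blinfun_apply (T 1) h - h"
    unfolding F_def by auto
  have "lam *\<^sub>R F - generator T F = g" unfolding F(2)
    using h by (simp add: algebra_simps)
  with F(1) show ?thesis by blast
qed

end

context
  fixes T :: "real \<Rightarrow> ('a::metric_space CS \<Rightarrow>\<^sub>L 'a CS)"
  assumes fs: "feller_semigroup T"
begin

lemma uniq:
  assumes lam: "lam > 0" and "f1 \<in> gen_dom T" "f2 \<in> gen_dom T"
    and eq: "lam *\<^sub>R f1 - generator T f1 = lam *\<^sub>R f2 - generator T f2"
  shows "f1 = f2"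
proof -
  from gen_lin[OF fs assms(2,3), of 1 "-1"]
  have d: "f1 - f2 \<in> gen_dom T" "generator T (f1 - f2) = generator T f1 - generator T f2" by auto
  have "lam * norm (f1 - f2) \<le> norm (lam *\<^sub>R (f1 - f2) - generator T (f1 - f2))"
    by (rule dissip[OF fs d(1) lam])
  also have "lam *\<^sub>R (f1 - f2) - generator T (f1 - f2) = 0"
    unfolding d(2) using eq by (simp add: algebra_simps)
  finally show ?thesis using lam by (simp add: mult_le_0_iff)
qed

lemma res_char:
  assumes lam: "lam > 0" and "f \<in> gen_dom T" "lam *\<^sub>R f - generator T f = h"
  shows "resolvent T lam h = f"
  unfolding resolvent_def
  by (rule the_equality) (use assms uniq in auto)

lemma res_prop:
  assumes lam: "lam > 0"
  shows "resolvent T lam h \<in> gen_dom T \<and> lam *\<^sub>R resolvent T lam h - generator T (resolvent T lam h) = h"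
proof -
  obtain f where "f \<in> gen_dom T" "lam *\<^sub>R f - generator T f = h" using exist[OF fs lam] by blast
  with res_char[OF lam this] show ?thesis by simp
qed

lemma res_lin:
  assumes lam: "lam > 0"
  shows "resolvent T lam (a *\<^sub>R g1 + b *\<^sub>R g2) = a *\<^sub>R resolvent T lam g1 + b *\<^sub>R resolvent T lam g2"
proof (rule res_char[OF lam])
  note p1 = res_prop[OF lam, of g1] and p2 = res_prop[OF lam, of g2]
  note l = gen_lin[OF fs conjunct1[OF p1] conjunct1[OF p2], of a b]
  show "a *\<^sub>R resolvent T lam g1 + b *\<^sub>R resolvent T lam g2 \<in> gen_dom T" using l by simp
  have "lam *\<^sub>R (a *\<^sub>R resolvent T lam g1 + b *\<^sub>R resolvent T lam g2) -
      generator T (a *\<^sub>R resolvent T lam g1 + b *\<^sub>R resolvent T lam g2)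
    = a *\<^sub>R (lam *\<^sub>R resolvent T lam g1 - generator T (resolvent T lam g1))
      + b *\<^sub>R (lam *\<^sub>R resolvent T lam g2 - generator T (resolvent T lam g2))"
    using l by (simp add: algebra_simps)
  also have "\<dots> = a *\<^sub>R g1 + b *\<^sub>R g2" using p1 p2 by simp
  finally show "lam *\<^sub>R (a *\<^sub>R resolvent T lam g1 + b *\<^sub>R resolvent T lam g2) -
      generator T (a *\<^sub>R resolvent T lam g1 + b *\<^sub>R resolvent T lam g2) = a *\<^sub>R g1 + b *\<^sub>R g2" .
qed

lemma res_norm:
  assumes lam: "lam > 0"
  shows "norm (resolvent T lam h) \<le> norm h * (1 / lam)"
proof -
  note p = res_prop[OF lam, of h]
  have "lam * norm (resolvent T lam h) \<le> norm h"
    using dissip[OF fs conjunct1[OF p] lam] p by simp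
  then show ?thesis using lam by (simp add: field_simps)
qed

lemma res_bl:
  assumes lam: "lam > 0"
  shows "bounded_linear (resolvent T lam)"
proof (rule bounded_linear_intro)
  show "resolvent T lam (x + y) = resolvent T lam x + resolvent T lam y" for x y
    using res_lin[OF lam, of 1 x 1 y] by simp
  show "resolvent T lam (r *\<^sub>R x) = r *\<^sub>R resolvent T lam x" for r x
    using res_lin[OF lam, of r x 0 x] by simp
  show "norm (resolvent T lam x) \<le> norm x * (1 / lam)" for x
    by (rule res_norm[OF lam])
qed

lemma res_ident:
  assumes lam: "lam > 0" and mu: "mu > 0"
  shows "resolvent T mu g - resolvent T lam g = (lam - mu) *\<^sub>R resolvent T lam (resolvent T mu g)"
proof -
  let ?f = "resolvent T mu g"
  note p = res_prop[OF mu, of g]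
  have "resolvent T lam (1 *\<^sub>R g + (lam - mu) *\<^sub>R ?f) = ?f"
    by (rule res_char[OF lam]) (use p in \<open>auto simp: algebra_simps\<close>)
  then show ?thesis using res_lin[OF lam, of 1 g "lam - mu" ?f] by (simp add: algebra_simps)
qed

definition Rop :: "real \<Rightarrow> ('a CS \<Rightarrow>\<^sub>L 'a CS)" where
  "Rop lam = Blinfun (resolvent T lam)"

lemma Rop_apply: "lam > 0 \<Longrightarrow> blinfun_apply (Rop lam) = resolvent T lam"
  unfolding Rop_def by (rule bounded_linear_Blinfun_apply[OF res_bl])

lemma Rop_norm: "lam > 0 \<Longrightarrow> norm (Rop lam) \<le> 1 / lam"
  by (rule norm_blinfun_bound) (auto simp: Rop_apply res_norm[simplified])

lemma Rop_diff:
  assumes lam: "lam > 0" and mu: "mu > 0"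
  shows "Rop mu - Rop lam = (mu - lam) *\<^sub>R (- (Rop lam o\<^sub>L Rop mu))"
  by (rule blinfun_eqI) (simp add: blinfun.diff_left blinfun.scaleR_left blinfun.minus_left Rop_apply lam mu res_ident[OF lam mu] algebra_simps)

lemma Rop_cont:
  assumes lam: "lam > 0"
  shows "(Rop \<longlongrightarrow> Rop lam) (at lam)"
proof -
  have ev: "eventually (\<lambda>mu. norm (Rop mu - Rop lam) \<le> \<bar>mu - lam\<bar> * (2 / lam) * (1 / lam)) (at lam)"
  proof -
    have "eventually (\<lambda>mu. mu > lam / 2) (at lam)"
      using lam by (intro order_tendstoD(1)[OF tendsto_ident_at]) auto
    then show ?thesis
    proof eventually_elim
      case (elim mu)
      then have mu: "mu > 0" "1 / mu \<le> 2 / lam" using lam by (auto simp: field_simps)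
      have "norm (Rop mu - Rop lam) = \<bar>mu - lam\<bar> * norm (Rop lam o\<^sub>L Rop mu)"
        unfolding Rop_diff[OF lam mu(1)] by simp
      also have "\<dots> \<le> \<bar>mu - lam\<bar> * (norm (Rop lam) * norm (Rop mu))"
        by (intro mult_left_mono norm_blinfun_compose) auto
      also have "\<dots> \<le> \<bar>mu - lam\<bar> * ((1 / lam) * (2 / lam))"
        using lam Rop_norm[OF lam] Rop_norm[OF mu(1)] mu(2)
        by (intro mult_left_mono mult_mono) auto
      finally show ?case by (simp add: algebra_simps)
    qed
  qed
  have "((\<lambda>mu. \<bar>mu - lam\<bar> * (2 / lam) * (1 / lam)) \<longlongrightarrow> \<bar>lam - lam\<bar> * (2 / lam) * (1 / lam)) (at lam)"
    by (intro tendsto_intros)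
  then have "((\<lambda>mu. Rop mu - Rop lam) \<longlongrightarrow> 0) (at lam)"
    using Lim_null_comparison[OF ev] by simp
  then show ?thesis by (simp add: LIM_zero_iff)
qed

end

lemma deriv_from_quot:
  fixes f :: "real \<Rightarrow> 'b::real_normed_vector"
  assumes "eventually (\<lambda>mu. f mu - f lam = (mu - lam) *\<^sub>R g mu) (at lam)"
    and "(g \<longlongrightarrow> g lam) (at lam)"
  shows "(f has_vector_derivative g lam) (at lam)"
proof -
  have "((\<lambda>mu. norm (g mu - g lam)) \<longlongrightarrow> 0) (at lam)"
    using assms(2) by (simp add: tendsto_norm_zero_iff LIM_zero_iff)
  moreover have "eventually (\<lambda>mu. norm (g mu - g lam) = norm ((f mu - f lam) - (mu - lam) *\<^sub>R g lam) / norm (mu - lam)) (at lam)"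
    using assms(1) unfolding eventually_at_filter
  proof (rule eventually_mono)
    fix mu assume "mu \<noteq> lam \<longrightarrow> mu \<in> UNIV \<longrightarrow> f mu - f lam = (mu - lam) *\<^sub>R g mu"
    then show "mu \<noteq> lam \<longrightarrow> mu \<in> UNIV \<longrightarrow> norm (g mu - g lam) = norm ((f mu - f lam) - (mu - lam) *\<^sub>R g lam) / norm (mu - lam)"
      by (auto simp: scaleR_right_diff_distrib[symmetric])
  qed
  ultimately have "((\<lambda>mu. norm ((f mu - f lam) - (mu - lam) *\<^sub>R g lam) / norm (mu - lam)) \<longlongrightarrow> 0) (at lam)"
    by (rule Lim_transform_eventually)
  then show ?thesis
    unfolding has_vector_derivative_def has_derivative_iff_norm by (auto intro: bounded_linear_scaleR_left)
qed


theorem proposition1: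
  fixes T :: "real \<Rightarrow> ('a::metric_space CS \<Rightarrow>\<^sub>L 'a CS)"
    and l :: "real \<Rightarrow> 'a CS"
  assumes "compact (UNIV :: 'a set)"
    and "feller_semigroup T"
    and "\<forall>lam>0. \<exists>e>0. \<exists>M. \<forall>mu. mu > 0 \<and> \<bar>mu - lam\<bar> < e \<longrightarrow> norm (l mu) \<le> M"
    and "\<forall>lam>0. \<forall>mu>0. (lam - mu) *\<^sub>R resolvent T lam (l mu) = l mu - l lam"
  shows "\<exists>D :: nat \<Rightarrow> real \<Rightarrow> 'a CS.
           (\<forall>lam>0. D 0 lam = l lam) \<and>
           (\<forall>n. \<forall>lam>0. (D n has_vector_derivative D (Suc n) lam) (at lam)) \<and>
           (\<forall>n\<ge>1. \<forall>lam>0. D n lam = ((-1) ^ n * fact n) *\<^sub>R ((resolvent T lam ^^ n) (l lam)))"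
proof -
  note fs = assms(2) and hyp = assms(4)
  define P where "P n mu = (resolvent T mu ^^ n) (l mu)" for n mu
  have PS: "P (Suc n) mu = blinfun_apply (Rop T mu) (P n mu)" if "mu > 0" for n mu
    unfolding P_def using Rop_apply[OF fs that] by simp
  have ev_pos: "eventually (\<lambda>mu. mu > 0) (at lam)" if "lam > 0" for lam :: real
    using that by (intro order_tendstoD(1)[OF tendsto_ident_at])
  have Rderiv: "(Rop T has_vector_derivative - (Rop T lam o\<^sub>L Rop T lam)) (at lam)" if lam: "lam > 0" for lam
  proof (rule deriv_from_quot[where g="\<lambda>mu. - (Rop T lam o\<^sub>L Rop T mu)"])
    show "eventually (\<lambda>mu. Rop T mu - Rop T lam = (mu - lam) *\<^sub>R (- (Rop T lam o\<^sub>L Rop T mu))) (at lam)"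
      using ev_pos[OF lam] by eventually_elim (rule Rop_diff[OF fs lam])
    show "((\<lambda>mu. - (Rop T lam o\<^sub>L Rop T mu)) \<longlongrightarrow> - (Rop T lam o\<^sub>L Rop T lam)) (at lam)"
      by (intro tendsto_minus bounded_bilinear.tendsto[OF bounded_bilinear_blinfun_compose]
          tendsto_const Rop_cont[OF fs lam])
  qed
  have lderiv: "(l has_vector_derivative - blinfun_apply (Rop T lam) (l lam)) (at lam)" if lam: "lam > 0" for lam
  proof (rule deriv_from_quot[where g="\<lambda>mu. - blinfun_apply (Rop T mu) (l lam)"])
    show "eventually (\<lambda>mu. l mu - l lam = (mu - lam) *\<^sub>R (- blinfun_apply (Rop T mu) (l lam))) (at lam)"
      using ev_pos[OF lam]
    proof eventually_elim
      case (elim mu)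
      from hyp elim lam have "(mu - lam) *\<^sub>R resolvent T mu (l lam) = l lam - l mu" by blast
      then show ?case using Rop_apply[OF fs elim] by simp
    qed
    show "((\<lambda>mu. - blinfun_apply (Rop T mu) (l lam)) \<longlongrightarrow> - blinfun_apply (Rop T lam) (l lam)) (at lam)"
      by (intro tendsto_minus bounded_bilinear.tendsto[OF bounded_bilinear_blinfun_apply]
          tendsto_const Rop_cont[OF fs lam])
  qed
  have Pderiv: "\<forall>lam>0. (P n has_vector_derivative (- (real n + 1)) *\<^sub>R P (Suc n) lam) (at lam)" for n
  proof (induction n)
    case 0
    show ?case
    proof (intro allI impI)
      fix lam :: real assume lam: "lam > 0"
      have "P 0 = l" unfolding P_def by (simp add: fun_eq_iff)
      then show "(P 0 has_vector_derivative (- (real 0 + 1)) *\<^sub>R P (Suc 0) lam) (at lam)"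
        using lderiv[OF lam] PS[OF lam, of 0] by simp
    qed
  next
    case (Suc n)
    show ?case
    proof (intro allI impI)
      fix lam :: real assume lam: "lam > 0"
      have d: "((\<lambda>mu. blinfun_apply (Rop T mu) (P n mu)) has_vector_derivative
          blinfun_apply (Rop T lam) ((- (real n + 1)) *\<^sub>R P (Suc n) lam) + blinfun_apply (- (Rop T lam o\<^sub>L Rop T lam)) (P n lam)) (at lam)"
        by (rule bounded_bilinear.has_vector_derivative[OF bounded_bilinear_blinfun_apply Rderiv[OF lam]])
           (use Suc lam in blast)
      have v: "blinfun_apply (Rop T lam) ((- (real n + 1)) *\<^sub>R P (Suc n) lam) + blinfun_apply (- (Rop T lam o\<^sub>L Rop T lam)) (P n lam)
          = (- (real (Suc n) + 1)) *\<^sub>R P (Suc (Suc n)) lam"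
        using PS[OF lam, of "Suc n"] PS[OF lam, of n]
        by (simp add: blinfun.scaleR_right blinfun.minus_left blinfun.minus_right blinfun.diff_right blinfun.add_right algebra_simps scaleR_2)
      show "(P (Suc n) has_vector_derivative (- (real (Suc n) + 1)) *\<^sub>R P (Suc (Suc n)) lam) (at lam)"
        by (rule has_vector_derivative_transform_within_open[OF d[unfolded v], of "{0<..}"])
           (use lam PS in auto)
    qed
  qed
  define D where "D n mu = ((-1) ^ n * fact n) *\<^sub>R P n mu" for n mu
  show ?thesis
  proof (intro exI[of _ D] conjI allI impI)
    fix lam :: real assume "lam > 0"
    show "D 0 lam = l lam" unfolding D_def P_def by simp
  next
    fix n and lam :: real assume lam: "lam > 0"
    have "(D n has_vector_derivative ((-1) ^ n * fact n) *\<^sub>R ((- (real n + 1)) *\<^sub>R P (Suc n) lam)) (at lam)"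
      unfolding D_def
      by (rule bounded_linear.has_vector_derivative[OF bounded_linear_scaleR_right]) (use Pderiv lam in blast)
    moreover have "((-1) ^ n * fact n) *\<^sub>R ((- (real n + 1)) *\<^sub>R P (Suc n) lam) = D (Suc n) lam"
      unfolding D_def by (simp add: algebra_simps)
    ultimately show "(D n has_vector_derivative D (Suc n) lam) (at lam)" by simp
  next
    fix n :: nat and lam :: real assume "n \<ge> 1" "lam > 0"
    show "D n lam = ((-1) ^ n * fact n) *\<^sub>R ((resolvent T lam ^^ n) (l lam))"
      unfolding D_def P_def ..
  qed
qed

end
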